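(* Let $(\mathcal G,L,I)$ be a relational symplectic groupoid. Then $L_2:=L_3\circ(L_1\times Id)$ also satisfies $$L_2=L_3\circ(Id\times L_1).$$
   Context: Relations: for sets $A,B$, a relation $R:A\nrightarrow B$ is a subset $R\subset A\times B$. The composition of $R:A\nrightarrow B$ and $R':B\nrightarrow C$ is $R'\circ R=\{(a,c): \exists b,\ (a,b)\in R,\ (b,c)\in R'\}$. The transpose is $R^*=\{(b,a):(a,b)\in R\}$. Products $R_1\times R_2:A_1\times A_2\nrightarrow B_1\times B_2$ are taken componentwise. $*$ denotes a one-point set, and a relation $*\nrightarrow B$ is identified with a subset of $B$; in particular $L_1\times Id$ is the relation $\mathcal G\nrightarrow\mathcal G\times\mathcal G$ given by $\{(y,(l,y)):l\in L_1\}$, and $Id\times L_1$ is $\{(y,(y,l)):l\in L_1\}$. For a (possibly infinite-dimensional, weak) symplectic manifold $\mathcal M$, $\bar{\mathcal M}$ denotes $\mathcal M$ with the negated symplectic form. An immersed canonical relation $\mathcal M\nrightarrow\mathcal N$ is an immersed Lagrangian submanifold of $\bar{\mathcal M}\times\mathcal N$. A relational symplectic groupoid is a triple $(\mathcal G,L,I)$ consisting of: - a weak symplectic manifold $\mathcal G$ (the induced map $T\mathcal G\to T^*\mathcal G$ is injective); - an immersed Lagrangian submanifold $L\subset\mathcal G^3$; - an antisymplectomorphism $I:\mathcal G\to\mathcal G$. Notation: - $L_{rel}:\mathcal G\times\mathcal G\nrightarrow\bar{\mathcal G}$ is the subset $\{((x,y),z):(x,y,z)\in L\}$. - $I_{rel}:\bar{\mathcal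 G}\nrightarrow\mathcal G$ is the graph $\{(x,I(x))\}$. - $\overline{L_{rel}}:\bar{\mathcal G}\times\bar{\mathcal G}\nrightarrow\mathcal G$ and $\overline{I_{rel}}:\mathcal G\nrightarrow\bar{\mathcal G}$ are the same subsets regarded between the sign-reversed manifolds. - $T_{rel}$ and $\overline{T_{rel}}$ denote the graph of the transposition $(x,y)\mapsto(y,x)$ on $\mathcal G\times\mathcal G$, respectively on $\bar{\mathcal G}\times\bar{\mathcal G}$. - $Id$ denotes the graph of the identity. - $L_I:*\nrightarrow\mathcal G\times\mathcal G$ is the subset $\{(x,I(x)):x\in\mathcal G\}$. - $L_3:=I_{rel}\circ L_{rel}:\mathcal G\times\mathcal G\nrightarrow\mathcal G$, i.e. $L_3=\{((x,y),I(z)):(x,y,z)\in L\}$. Axioms: - (A.1) $L$ is cyclically symmetric: $(x,y,z)\in L\Rightarrow(y,z,x)\in L$. - (A.2) $I^2=\mathrm{id}$. - (A.3) $I_{rel}\circ L_{rel}=\overline{L_{rel}}\circ\overline{T_{rel}}\circ(\overline{I_{rel}}\times\overline{I_{rel}})$. - (A.4) $L_3\circ(L_3\times Id)=L_3\circ(Id\times L_3)$, and this is an immersed Lagrangian submanifold (as a relation $\mathcal G^3\nrightarrow\mathcal G$). - (A.5) $L_1:=L_3\circ L_I$ is an immersed Lagrangian submanifold of $\mathcal G$. - (A.6) $L_3\circ(L_1\times L_1)=L_1$. - (A.7) $L_2:=L_3\circ(L_1\times Id)$ is an immersed Lagrangian submanifold of $\bar{\mathcal G}\times\mathcal G$. 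*)

theory Defs
  imports Main
begin

text \<open>Relations A -/-> B are sets of pairs (A \<times> B) set; the composition R' \<circ> R of the
paper (first R, then R') is Isabelle's relcomp  R O R'.\<close>

definition L_rel :: "('g \<times> 'g \<times> 'g) set \<Rightarrow> (('g \<times> 'g) \<times> 'g) set" where
  "L_rel L = {((x, y), z) | x y z. (x, y, z) \<in> L}"

definition I_rel :: "('g \<Rightarrow> 'g) \<Rightarrow> ('g \<times> 'g) set" where
  "I_rel I = {(x, I x) | x. True}"

definition T_rel :: "(('g \<times> 'g) \<times> ('g \<times> 'g)) set" where
  "T_rel = {((x, y), (y, x)) | x y. True}"

definition prod_rel :: "('a \<times> 'b) set \<Rightarrow> ('c \<times> 'd) set \<Rightarrow> (('a \<times> 'c) \<times> ('b \<times> 'd)) set" where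
  "prod_rel R1 R2 = {((a1, a2), (b1, b2)) | a1 a2 b1 b2. (a1, b1) \<in> R1 \<and> (a2, b2) \<in> R2}"

definition assoc_rel :: "((('g \<times> 'g) \<times> 'g) \<times> ('g \<times> ('g \<times> 'g))) set" where
  "assoc_rel = {(((x, y), z), (x, (y, z))) | x y z. True}"

definition L3 :: "('g \<times> 'g \<times> 'g) set \<Rightarrow> ('g \<Rightarrow> 'g) \<Rightarrow> (('g \<times> 'g) \<times> 'g) set" where
  "L3 L I = L_rel L O I_rel I"

definition L_I :: "('g \<Rightarrow> 'g) \<Rightarrow> (unit \<times> ('g \<times> 'g)) set" where
  "L_I I = {((), (x, I x)) | x. True}"

text \<open>L1 = L3 \<circ> L_I, a relation * -/-> G, identified with a subset of G.\<close>
definition L1 :: "('g \<times> 'g \<times> 'g) set \<Rightarrow> ('g \<Rightarrow> 'g) \<Rightarrow> 'g set" where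
  "L1 L I = {l. ((), l) \<in> L_I I O L3 L I}"

definition L1xId :: "'g set \<Rightarrow> ('g \<times> ('g \<times> 'g)) set" where
  "L1xId S = {(y, (l, y)) | y l. l \<in> S}"

definition IdxL1 :: "'g set \<Rightarrow> ('g \<times> ('g \<times> 'g)) set" where
  "IdxL1 S = {(y, (y, l)) | y l. l \<in> S}"

definition L2 :: "('g \<times> 'g \<times> 'g) set \<Rightarrow> ('g \<Rightarrow> 'g) \<Rightarrow> ('g \<times> 'g) set" where
  "L2 L I = L1xId (L1 L I) O L3 L I"

end

theory Submission
  imports Defs
begin

lemma L3_mem:
  assumes A2: "\<And>x. I (I x) = x"
  shows "((a, b), c) \<in> L3 L I \<longleftrightarrow> (a, b, I c) \<in> L"
  unfolding L3_def L_rel_def I_rel_def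
  by (auto simp: A2 relcomp_unfold)

lemma assoc_pt:
  assumes A4: "prod_rel (L3 L I) Id O L3 L I = assoc_rel O prod_rel Id (L3 L I) O L3 L I"
  shows "(\<exists>u. ((x, y), u) \<in> L3 L I \<and> ((u, w), r) \<in> L3 L I) \<longleftrightarrow>
         (\<exists>v. ((y, w), v) \<in> L3 L I \<and> ((x, v), r) \<in> L3 L I)"
proof -
  have l: "(((x, y), w), r) \<in> prod_rel (L3 L I) Id O L3 L I \<longleftrightarrow>
       (\<exists>u. ((x, y), u) \<in> L3 L I \<and> ((u, w), r) \<in> L3 L I)"
    unfolding prod_rel_def by blast
  have r: "(((x, y), w), r) \<in> assoc_rel O prod_rel Id (L3 L I) O L3 L I \<longleftrightarrow>
       (\<exists>v. ((y, w), v) \<in> L3 L I \<and> ((x, v), r) \<in> L3 L I)"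
    unfolding prod_rel_def assoc_rel_def by blast
  show ?thesis using l r A4 by simp
qed

theorem mainTheorem3:
  fixes L :: "('g \<times> 'g \<times> 'g) set" and I :: "'g \<Rightarrow> 'g"
  assumes A1: "\<And>x y z. (x, y, z) \<in> L \<Longrightarrow> (y, z, x) \<in> L"
    and A2: "\<And>x. I (I x) = x"
    and A3: "L3 L I = prod_rel (I_rel I) (I_rel I) O T_rel O L_rel L"
    and A4: "prod_rel (L3 L I) Id O L3 L I = assoc_rel O prod_rel Id (L3 L I) O L3 L I"
    and A6: "{z. \<exists>a b. a \<in> L1 L I \<and> b \<in> L1 L I \<and> ((a, b), z) \<in> L3 L I} = L1 L I"
  shows "L2 L I = IdxL1 (L1 L I) O L3 L I"
proof -
  define m where "m a b c \<longleftrightarrow> (a, b, I c) \<in> L" for a b c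
  have M: "((a, b), c) \<in> L3 L I \<longleftrightarrow> m a b c" for a b c
    unfolding m_def by (rule L3_mem[OF A2])
  have AS: "(\<exists>u. m x y u \<and> m u w r) \<longleftrightarrow> (\<exists>v. m y w v \<and> m x v r)" for x y w r
    using assoc_pt[OF A4, of x y w r] by (simp add: M)
  have C: "m x y z \<Longrightarrow> m y (I z) (I x)" for x y z
    unfolding m_def using A1 A2 by metis
  have L1m: "l \<in> L1 L I \<longleftrightarrow> (\<exists>x. m x (I x) l)" for l
    unfolding L1_def L_I_def by (auto simp: M)
  have L2m: "(y, z) \<in> L2 L I \<longleftrightarrow> (\<exists>l. l \<in> L1 L I \<and> m l y z)" for y z
    unfolding L2_def L1xId_def relcomp_unfold using M by blast
  have Rm: "(y, z) \<in> IdxL1 (L1 L I) O L3 L I \<longleftrightarrow> (\<exists>l. l \<in> L1 L I \<and> m y l z)" for y z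
    unfolding IdxL1_def relcomp_unfold using M by blast
  show ?thesis
  proof (rule set_eqI, clarify)
    fix y z
    show "(y, z) \<in> L2 L I \<longleftrightarrow> (y, z) \<in> IdxL1 (L1 L I) O L3 L I"
    proof
      assume "(y, z) \<in> L2 L I"
      then obtain l x where l: "m l y z" "m x (I x) l" using L2m L1m by blast
      then obtain v where v: "m (I x) y v" "m x v z" using AS[of x "I x" y z] by blast
      have "m y (I v) x" using C[OF v(1)] A2 by simp
      then obtain w where "m (I v) v w" "m y w z" using AS[of y "I v" v z] v(2) by blast
      then show "(y, z) \<in> IdxL1 (L1 L I) O L3 L I" using Rm L1m A2 by metis
    next
      assume "(y, z) \<in> IdxL1 (L1 L I) O L3 L I"
      then obtain l a where l: "m y l z" "m a (I a) l" using Rm L1m by blast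
      then obtain v where v: "m y a v" "m v (I a) z" using AS[of y a "I a" z] by blast
      have "m (I v) y (I a)" using C[OF C[OF v(1)]] A2 by simp
      then obtain w where "m v (I v) w" "m w y z" using AS[of v "I v" y z] v(2) by blast
      then show "(y, z) \<in> L2 L I" using L2m L1m by metis
    qed
  qed
qed

end
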